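(* Let $d\ge3$, let $\lambda$ be real, and let $\sigma$ be a Hermitian operator on $\mathbb{C}^d\otimes\mathbb{C}^d$ whose partial transpose is $\sigma^{PT}=\lambda I-(\lambda+1)|\Phi_0\rangle\langle\Phi_0|$, where $|\Phi_0\rangle=\frac{1}{\sqrt d}\sum_{j=0}^{d-1}|jj\rangle$. Then: (1) if $\lambda\ge 2/(d-2)$, then $\langle v|\sigma^{PT}|v\rangle\ge0$ for every vector $|v\rangle$ of Schmidt rank two (i.e. $\sigma$ is pseudo one-copy undistillable); (2) if $\lambda<2/(d-2)$, then there exists a vector $|v\rangle$ of Schmidt rank two with $\langle v|\sigma^{PT}|v\rangle<0$.
   Context: The partial transpose on the second factor is $\langle ij|X^{PT}|kl\rangle=\langle il|X|kj\rangle$. A (possibly unnormalized) state $\sigma$ is called pseudo one-copy undistillable if $\langle\phi|\sigma^{PT}|\phi\rangle\ge0$ for all vectors $|\phi\rangle$ of Schmidt rank two. *)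

theory Defs
  imports Complex_Main "HOL-Library.Complex_Order"
begin

text \<open>Operators on C^d (x) C^d are represented by their matrix entries
  X i j k l = <ij|X|kl>, vectors by their coefficients v i j = <ij|v>;
  only indices below d are relevant.\<close>

type_synonym op4 = "nat \<Rightarrow> nat \<Rightarrow> nat \<Rightarrow> nat \<Rightarrow> complex"
type_synonym vec2 = "nat \<Rightarrow> nat \<Rightarrow> complex"

definition partial_transpose :: "op4 \<Rightarrow> op4" where
  "partial_transpose X = (\<lambda>i j k l. X i l k j)"

definition hermitian_op :: "nat \<Rightarrow> op4 \<Rightarrow> bool" where
  "hermitian_op d X \<longleftrightarrow>
     (\<forall>i<d. \<forall>j<d. \<forall>k<d. \<forall>l<d. X i j k l = cnj (X k l i j))"

text \<open>Entries of |Phi_0><Phi_0| with |Phi_0> = (1/sqrt d) sum_j |jj>.\<close>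
definition Phi0_proj :: "nat \<Rightarrow> op4" where
  "Phi0_proj d = (\<lambda>i j k l. if i = j \<and> k = l then 1 / of_nat d else 0)"

definition id_op :: op4 where
  "id_op = (\<lambda>i j k l. if i = k \<and> j = l then 1 else 0)"

definition qform :: "nat \<Rightarrow> op4 \<Rightarrow> vec2 \<Rightarrow> complex" where
  "qform d X v = (\<Sum>i<d. \<Sum>j<d. \<Sum>k<d. \<Sum>l<d. cnj (v i j) * X i j k l * v k l)"

definition schmidt_rank :: "nat \<Rightarrow> vec2 \<Rightarrow> nat" where
  "schmidt_rank d v = (LEAST r. \<exists>a b :: nat \<Rightarrow> nat \<Rightarrow> complex.
      \<forall>i<d. \<forall>j<d. v i j = (\<Sum>s<r. a s i * b s j))"

end

theory Submission
  imports Defs "HOL-Analysis.Convex"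
begin

definition nrm :: "nat \<Rightarrow> (nat \<Rightarrow> complex) \<Rightarrow> real" where
  "nrm d e = (\<Sum>i<d. (cmod (e i))\<^sup>2)"

lemma cs_complex:
  "(cmod (\<Sum>i<d. a i * b i))\<^sup>2 \<le> nrm d a * nrm d b"
proof -
  have "cmod (\<Sum>i<d. a i * b i) \<le> (\<Sum>i<d. cmod (a i) * cmod (b i))"
    by (metis (no_types, lifting) norm_mult norm_sum sum.cong)
  hence "(cmod (\<Sum>i<d. a i * b i))\<^sup>2 \<le> (\<Sum>i<d. cmod (a i) * cmod (b i))\<^sup>2"
    by (simp add: power_mono)
  also have "\<dots> \<le> nrm d a * nrm d b" unfolding nrm_def by (rule Cauchy_Schwarz_ineq_sum)
  finally show ?thesis .
qed

lemma normV:
  assumes "(\<Sum>i<d. cnj (e1 i) * e2 i) = 0"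
  shows "(\<Sum>i<d. \<Sum>j<d. (cmod (e1 i * p j + e2 i * q j))\<^sup>2) = nrm d e1 * nrm d p + nrm d e2 * nrm d q"
proof -
  have c: "(\<Sum>i<d. e1 i * cnj (e2 i)) = 0"
  proof -
    have "(\<Sum>i<d. e1 i * cnj (e2 i)) = cnj (\<Sum>i<d. cnj (e1 i) * e2 i)" by (simp add: mult.commute)
    thus ?thesis using assms by simp
  qed
  have sq: "\<And>z. complex_of_real ((cmod z)\<^sup>2) = z * cnj z" by (metis complex_norm_square of_real_power)
  have "complex_of_real (\<Sum>i<d. \<Sum>j<d. (cmod (e1 i * p j + e2 i * q j))\<^sup>2)
     = (\<Sum>i<d. \<Sum>j<d. (e1 i * cnj (e1 i)) * (p j * cnj (p j)) + (e2 i * cnj (e2 i)) * (q j * cnj (q j))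
          + (e1 i * cnj (e2 i)) * (p j * cnj (q j)) + (cnj (e1 i) * e2 i) * (cnj (p j) * q j))"
    by (simp only: of_real_sum sq) (simp add: algebra_simps)
  also have "\<dots> = (\<Sum>i<d. e1 i * cnj (e1 i)) * (\<Sum>j<d. p j * cnj (p j)) + (\<Sum>i<d. e2 i * cnj (e2 i)) * (\<Sum>j<d. q j * cnj (q j))
          + (\<Sum>i<d. e1 i * cnj (e2 i)) * (\<Sum>j<d. p j * cnj (q j)) + (\<Sum>i<d. cnj (e1 i) * e2 i) * (\<Sum>j<d. cnj (p j) * q j)"
    by (simp add: sum.distrib sum_product)
  also have "\<dots> = complex_of_real (nrm d e1 * nrm d p + nrm d e2 * nrm d q)"
    using assms c by (simp only: nrm_def of_real_add of_real_mult of_real_sum sq) simp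
  finally show ?thesis using of_real_eq_iff by blast
qed


lemma sum_cnj_self: "(\<Sum>i<d. cnj (x i) * x i) = complex_of_real (nrm d x)"
proof -
  have sq: "\<And>z. complex_of_real ((cmod z)\<^sup>2) = cnj z * z"
    by (metis complex_norm_square of_real_power mult.commute)
  show ?thesis unfolding nrm_def by (simp only: of_real_sum sq)
qed

lemma nrm_zero: "nrm d x = 0 \<Longrightarrow> i < d \<Longrightarrow> x i = 0"
  unfolding nrm_def by (subst (asm) sum_nonneg_eq_0_iff) auto

lemma trace_bound:
  fixes d :: nat and e1 e2 p q :: "nat \<Rightarrow> complex"
  assumes "(\<Sum>i<d. cnj (e1 i) * e2 i) = 0"
  shows "(cmod (\<Sum>i<d. e1 i * p i + e2 i * q i))\<^sup>2 \<le> 2 * (\<Sum>i<d. \<Sum>j<d. (cmod (e1 i * p j + e2 i * q j))\<^sup>2)"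
proof -
  define A where "A = cmod (\<Sum>i<d. e1 i * p i)"
  define B where "B = cmod (\<Sum>i<d. e2 i * q i)"
  have A: "A\<^sup>2 \<le> nrm d e1 * nrm d p" unfolding A_def by (rule cs_complex)
  have B: "B\<^sup>2 \<le> nrm d e2 * nrm d q" unfolding B_def by (rule cs_complex)
  have "cmod (\<Sum>i<d. e1 i * p i + e2 i * q i) \<le> A + B"
    unfolding A_def B_def sum.distrib by (rule norm_triangle_ineq)
  hence "(cmod (\<Sum>i<d. e1 i * p i + e2 i * q i))\<^sup>2 \<le> (A + B)\<^sup>2"
    by (simp add: power_mono)
  also have "\<dots> \<le> 2 * (A\<^sup>2 + B\<^sup>2)" 
  proof -
    have "0 \<le> (A - B)\<^sup>2" by simp
    thus ?thesis unfolding power2_diff power2_sum by (simp add: algebra_simps)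
  qed
  also have "\<dots> \<le> 2 * (nrm d e1 * nrm d p + nrm d e2 * nrm d q)" using A B by simp
  finally show ?thesis using normV[OF assms] by simp
qed

lemma gram_schmidt:
  fixes d :: nat and x y u w :: "nat \<Rightarrow> complex"
  shows "\<exists>e1 e2 p q. (\<Sum>i<d. cnj (e1 i) * e2 i) = 0 \<and>
     (\<forall>i j. x i * u j + y i * w j = e1 i * p j + e2 i * q j)"
proof -
  define c where "c = (\<Sum>i<d. cnj (x i) * y i) / (\<Sum>i<d. cnj (x i) * x i)"
  have orth: "(\<Sum>i<d. cnj (x i) * (y i - c * x i)) = 0"
  proof (cases "(\<Sum>i<d. cnj (x i) * x i) = 0")
    case True
    hence "nrm d x = 0" using sum_cnj_self by (metis of_real_eq_0_iff)
    hence "\<And>i. i < d \<Longrightarrow> x i = 0" using nrm_zero by blast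
    thus ?thesis by simp
  next
    case False
    have "(\<Sum>i<d. cnj (x i) * (y i - c * x i)) = (\<Sum>i<d. cnj (x i) * y i) - c * (\<Sum>i<d. cnj (x i) * x i)"
      unfolding right_diff_distrib sum_subtractf sum_distrib_left by (simp add: mult.left_commute)
    thus ?thesis using False unfolding c_def by simp
  qed
  show ?thesis
    by (rule exI[of _ x], rule exI[of _ "\<lambda>i. y i - c * x i"], rule exI[of _ "\<lambda>j. u j + c * w j"],
        rule exI[of _ w], intro conjI allI) (fact orth, simp add: algebra_simps)
qed

lemma rank2_bound:
  fixes d :: nat and v :: vec2 and a b :: "nat \<Rightarrow> nat \<Rightarrow> complex"
  assumes "\<forall>i<d. \<forall>j<d. v i j = (\<Sum>s<2. a s i * b s j)"
  shows "(cmod (\<Sum>i<d. v i i))\<^sup>2 \<le> 2 * (\<Sum>i<d. \<Sum>j<d. (cmod (v i j))\<^sup>2)"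
proof -
  obtain e1 e2 p q where o: "(\<Sum>i<d. cnj (e1 i) * e2 i) = 0" and
    r: "\<forall>i j. a 0 i * b 0 j + a 1 i * b 1 j = e1 i * p j + e2 i * q j"
    using gram_schmidt by blast
  have v: "\<And>i j. i < d \<Longrightarrow> j < d \<Longrightarrow> v i j = e1 i * p j + e2 i * q j"
    using assms r by (simp add: numeral_2_eq_2)
  have "(\<Sum>i<d. v i i) = (\<Sum>i<d. e1 i * p i + e2 i * q i)" by (simp add: v)
  moreover have "(\<Sum>i<d. \<Sum>j<d. (cmod (v i j))\<^sup>2) = (\<Sum>i<d. \<Sum>j<d. (cmod (e1 i * p j + e2 i * q j))\<^sup>2)"
    by (simp add: v)
  ultimately show ?thesis using trace_bound[OF o] by simp
qed


lemma sum_id_part: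
  fixes v :: vec2
  shows "(\<Sum>i<d. \<Sum>j<d. \<Sum>k<d. \<Sum>l<d. cnj (v i j) * id_op i j k l * v k l) = (\<Sum>i<d. \<Sum>j<d. cnj (v i j) * v i j)"
proof -
  have "\<And>i j. i < d \<Longrightarrow> j < d \<Longrightarrow> (\<Sum>k<d. \<Sum>l<d. cnj (v i j) * id_op i j k l * v k l) = cnj (v i j) * v i j"
  proof -
    fix i j assume ij: "i < d" "j < d"
    have pw: "\<And>k l. cnj (v i j) * id_op i j k l * v k l = (if l = j then (if k = i then cnj (v i j) * v i j else 0) else 0)"
      by (auto simp: id_op_def)
    show "(\<Sum>k<d. \<Sum>l<d. cnj (v i j) * id_op i j k l * v k l) = cnj (v i j) * v i j"
      by (simp only: pw) (simp add: ij sum.delta)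
  qed
  thus ?thesis by simp
qed

lemma sum_phi_part:
  fixes v :: vec2
  shows "(\<Sum>i<d. \<Sum>j<d. \<Sum>k<d. \<Sum>l<d. cnj (v i j) * (if i = j \<and> k = l then 1 else 0) * v k l)
     = cnj (\<Sum>i<d. v i i) * (\<Sum>i<d. v i i)"
proof -
  have "\<And>i. i < d \<Longrightarrow> (\<Sum>j<d. \<Sum>k<d. \<Sum>l<d. cnj (v i j) * (if i = j \<and> k = l then 1 else 0) * v k l)
     = (\<Sum>k<d. cnj (v i i) * v k k)"
  proof -
    fix i assume i: "i < d"
    have pw: "\<And>j k l. cnj (v i j) * (if i = j \<and> k = l then 1 else 0) * v k l
         = (if l = k then (if j = i then cnj (v i i) * v k k else 0) else 0)"
      by auto
    show "(\<Sum>j<d. \<Sum>k<d. \<Sum>l<d. cnj (v i j) * (if i = j \<and> k = l then 1 else 0) * v k l)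
     = (\<Sum>k<d. cnj (v i i) * v k k)"
      by (simp only: pw) (simp add: sum.delta, subst sum.swap, simp add: i sum.delta)
  qed
  hence "(\<Sum>i<d. \<Sum>j<d. \<Sum>k<d. \<Sum>l<d. cnj (v i j) * (if i = j \<and> k = l then 1 else 0) * v k l)
     = (\<Sum>i<d. \<Sum>k<d. cnj (v i i) * v k k)" by simp
  also have "\<dots> = cnj (\<Sum>i<d. v i i) * (\<Sum>i<d. v i i)" by (simp add: sum_product)
  finally show ?thesis .
qed

lemma qform_eq:
  fixes v :: vec2 and X :: op4 and lam :: real
  assumes "\<forall>i<d. \<forall>j<d. \<forall>k<d. \<forall>l<d. X i j k l =
           complex_of_real lam * id_op i j k l - complex_of_real (lam + 1) * Phi0_proj d i j k l"
  shows "qform d X v = complex_of_real (lam * (\<Sum>i<d. \<Sum>j<d. (cmod (v i j))\<^sup>2)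
            - (lam + 1) / real d * (cmod (\<Sum>i<d. v i i))\<^sup>2)"
proof -
  have sq: "\<And>z. complex_of_real ((cmod z)\<^sup>2) = cnj z * z"
    by (metis complex_norm_square of_real_power mult.commute)
  let ?I = "\<lambda>i j k l. cnj (v i j) * id_op i j k l * v k l"
  let ?P = "\<lambda>i j k l. cnj (v i j) * (if i = j \<and> k = l then 1 else 0) * v k l"
  have "qform d X v = (\<Sum>i<d. \<Sum>j<d. \<Sum>k<d. \<Sum>l<d.
          complex_of_real lam * ?I i j k l - complex_of_real ((lam + 1) / real d) * ?P i j k l)"
    unfolding qform_def
  proof (intro sum.cong refl)
    fix i j k l assume "i \<in> {..<d}" "j \<in> {..<d}" "k \<in> {..<d}" "l \<in> {..<d}"
    hence X: "X i j k l = complex_of_real lam * id_op i j k l - complex_of_real (lam + 1) * Phi0_proj d i j k l"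
      using assms by simp
    have P: "Phi0_proj d i j k l = (if i = j \<and> k = l then 1 else 0) / of_nat d"
      by (simp add: Phi0_proj_def)
    have R: "complex_of_real ((lam + 1) / real d) = complex_of_real (lam + 1) / of_nat d" by simp
    show "cnj (v i j) * X i j k l * v k l = complex_of_real lam * ?I i j k l - complex_of_real ((lam + 1) / real d) * ?P i j k l"
      unfolding X P R by (simp add: algebra_simps)
  qed
  also have "\<dots> = complex_of_real lam * (\<Sum>i<d. \<Sum>j<d. \<Sum>k<d. \<Sum>l<d. ?I i j k l)
       - complex_of_real ((lam + 1) / real d) * (\<Sum>i<d. \<Sum>j<d. \<Sum>k<d. \<Sum>l<d. ?P i j k l)"
    by (simp only: sum_subtractf sum_distrib_left)
  also have "\<dots> = complex_of_real lam * (\<Sum>i<d. \<Sum>j<d. cnj (v i j) * v i j)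
       - complex_of_real ((lam + 1) / real d) * (cnj (\<Sum>i<d. v i i) * (\<Sum>i<d. v i i))"
    by (simp only: sum_id_part sum_phi_part)
  also have "\<dots> = complex_of_real (lam * (\<Sum>i<d. \<Sum>j<d. (cmod (v i j))\<^sup>2)
            - (lam + 1) / real d * (cmod (\<Sum>i<d. v i i))\<^sup>2)"
    by (simp only: of_real_diff of_real_mult of_real_sum sq)
  finally show ?thesis .
qed


lemma schmidt_rep:
  fixes v :: vec2
  assumes "schmidt_rank d v = 2"
  shows "\<exists>a b :: nat \<Rightarrow> nat \<Rightarrow> complex. \<forall>i<d. \<forall>j<d. v i j = (\<Sum>s<2. a s i * b s j)"
proof -
  have ex: "\<exists>(r::nat) (a::nat \<Rightarrow> nat \<Rightarrow> complex) (b::nat \<Rightarrow> nat \<Rightarrow> complex). \<forall>i<d. \<forall>j<d. v i j = (\<Sum>s<r. a s i * b s j)"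
  proof (rule exI[of _ d], rule exI[of _ "\<lambda>s i. if i = s then 1 else 0"], rule exI[of _ v], intro allI impI)
    fix i j assume "i < d" "j < d"
    show "v i j = (\<Sum>s<d. (\<lambda>s i. if i = s then 1 else 0) s i * v s j)"
      using \<open>i < d\<close> by (simp add: if_distrib[of "\<lambda>x. x * _"] sum.delta cong: if_cong)
  qed
  show ?thesis using LeastI_ex[OF ex] assms unfolding schmidt_rank_def by simp
qed

definition wit :: vec2 where "wit = (\<lambda>i j. if i = j \<and> i < 2 then 1 else 0)"

lemma sum_first2:
  fixes g :: "nat \<Rightarrow> 'a::comm_monoid_add"
  assumes "2 \<le> d" "\<And>i. 2 \<le> i \<Longrightarrow> g i = 0"
  shows "(\<Sum>i<d. g i) = g 0 + g 1"
proof -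
  have "(\<Sum>i<d. g i) = (\<Sum>i\<in>{0,1}. g i)"
    by (rule sum.mono_neutral_right) (use assms in auto)
  thus ?thesis by simp
qed

lemma wit_rank: assumes "2 \<le> d" shows "schmidt_rank d wit = 2"
  unfolding schmidt_rank_def
proof (rule Least_equality)
  show "\<exists>a b :: nat \<Rightarrow> nat \<Rightarrow> complex. \<forall>i<d. \<forall>j<d. wit i j = (\<Sum>s<2. a s i * b s j)"
    by (rule exI[of _ "\<lambda>s i. if i = s then 1 else 0"], rule exI[of _ "\<lambda>s i. if i = s then 1 else 0"])
       (auto simp: wit_def numeral_2_eq_2)
next
  fix r assume "\<exists>a b :: nat \<Rightarrow> nat \<Rightarrow> complex. \<forall>i<d. \<forall>j<d. wit i j = (\<Sum>s<r. a s i * b s j)"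
  then obtain a b :: "nat \<Rightarrow> nat \<Rightarrow> complex" where ab: "\<forall>i<d. \<forall>j<d. wit i j = (\<Sum>s<r. a s i * b s j)" by blast
  show "2 \<le> r"
  proof (rule ccontr)
    assume "\<not> 2 \<le> r"
    hence "r = 0 \<or> r = 1" by auto
    thus False
    proof
      assume "r = 0" thus False using ab[rule_format, of 0 0] assms by (simp add: wit_def)
    next
      assume r1: "r = 1"
      have "wit 0 0 * wit 1 1 = wit 0 1 * wit 1 0"
        using ab[rule_format, of 0 0] ab[rule_format, of 1 1] ab[rule_format, of 0 1] ab[rule_format, of 1 0] assms r1
        by simp
      thus False by (simp add: wit_def)
    qed
  qed
qed

theorem theorem2:
  fixes d :: nat and lam :: real and \<sigma> :: op4
  assumes "d \<ge> 3"
    and "hermitian_op d \<sigma>"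
    and "\<forall>i<d. \<forall>j<d. \<forall>k<d. \<forall>l<d. partial_transpose \<sigma> i j k l =
           complex_of_real lam * id_op i j k l - complex_of_real (lam + 1) * Phi0_proj d i j k l"
  shows "(lam \<ge> 2 / (real d - 2) \<longrightarrow>
            (\<forall>v. schmidt_rank d v = 2 \<longrightarrow> qform d (partial_transpose \<sigma>) v \<ge> 0))
       \<and> (lam < 2 / (real d - 2) \<longrightarrow>
            (\<exists>v. schmidt_rank d v = 2 \<and> qform d (partial_transpose \<sigma>) v < 0))"
proof (intro conjI impI allI)
  have dpos: "real d - 2 > 0" using assms(1) by simp
  have Q: "\<And>v. qform d (partial_transpose \<sigma>) v = complex_of_real (lam * (\<Sum>i<d. \<Sum>j<d. (cmod (v i j))\<^sup>2)
            - (lam + 1) / real d * (cmod (\<Sum>i<d. v i i))\<^sup>2)"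
    by (rule qform_eq[OF assms(3)])
  {
    fix v :: vec2
    assume lam: "lam \<ge> 2 / (real d - 2)" and r: "schmidt_rank d v = 2"
    obtain a b :: "nat \<Rightarrow> nat \<Rightarrow> complex" where ab: "\<forall>i<d. \<forall>j<d. v i j = (\<Sum>s<2. a s i * b s j)" using schmidt_rep[OF r] by blast
    define N where "N = (\<Sum>i<d. \<Sum>j<d. (cmod (v i j))\<^sup>2)"
    define T where "T = (cmod (\<Sum>i<d. v i i))\<^sup>2"
    have TN: "T \<le> 2 * N" unfolding T_def N_def by (rule rank2_bound[OF ab])
    have N0: "N \<ge> 0" unfolding N_def by (intro sum_nonneg) auto
    have l2: "lam * (real d - 2) \<ge> 2" using lam dpos by (simp add: field_simps)
    have lp: "lam + 1 > 0" using l2 dpos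
      by (smt (verit) mult_nonpos_nonneg)
    have "(lam + 1) / real d * T \<le> (lam + 1) / real d * (2 * N)"
      using TN lp by (intro mult_left_mono) auto
    also have "\<dots> \<le> lam * N"
    proof -
      have "(lam + 1) * 2 \<le> lam * real d" using l2 by (simp add: algebra_simps)
      hence "(lam + 1) * 2 * N \<le> lam * real d * N" using N0 by (intro mult_right_mono)
      thus ?thesis using dpos by (simp add: field_simps)
    qed
    finally have "0 \<le> lam * N - (lam + 1) / real d * T" by simp
    thus "qform d (partial_transpose \<sigma>) v \<ge> 0"
      unfolding Q N_def[symmetric] T_def[symmetric] by (simp add: less_eq_complex_def)
  }
  {
    assume lam: "lam < 2 / (real d - 2)"
    have d2: "2 \<le> d" using assms(1) by simp
    have N: "(\<Sum>i<d. \<Sum>j<d. (cmod (wit i j))\<^sup>2) = 2"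
    proof -
      have "(\<Sum>i<d. \<Sum>j<d. (cmod (wit i j))\<^sup>2) = (\<Sum>i<d. if i < 2 then 1 else 0)"
        by (intro sum.cong refl) (simp add: wit_def if_distrib[of "\<lambda>x. (cmod x)\<^sup>2"] sum.delta cong: if_cong)
      also have "\<dots> = 2" by (subst sum_first2[OF d2]) auto
      finally show ?thesis .
    qed
    have T: "(\<Sum>i<d. wit i i) = 2"
      by (subst sum_first2[OF d2]) (auto simp: wit_def)
    have l2: "lam * (real d - 2) < 2" using lam dpos by (simp add: field_simps)
    have "2 * lam - (lam + 1) / real d * 4 < 0"
    proof -
      have "2 * lam * real d < (lam + 1) * 4" using l2 by (simp add: algebra_simps)
      thus ?thesis using dpos by (simp add: field_simps)
    qed
    hence "qform d (partial_transpose \<sigma>) wit < 0"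
      unfolding Q N T by (simp add: less_complex_def)
    thus "\<exists>v. schmidt_rank d v = 2 \<and> qform d (partial_transpose \<sigma>) v < 0"
      using wit_rank[OF d2] by blast
  }
qed

end
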